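(* Let $(A,\cdot)$ be a commutative nearly associative algebra over a field $\mathbb{K}$ of characteristic $0$. Then $(A,\cdot)$ is anti-flexible, i.e. $(x\cdot y)\cdot z-(z\cdot y)\cdot x=x\cdot(y\cdot z)-z\cdot(y\cdot x)$ for all $x,y,z\in A$ (equivalently, $a(x,y,z)=a(z,y,x)$ where $a(x,y,z)=(x\cdot y)\cdot z-x\cdot(y\cdot z)$).
   Context: An algebra $(A,\cdot)$ (linear space with bilinear product) is nearly associative if $x\cdot(y\cdot z)=(z\cdot x)\cdot y$ for all $x,y,z\in A$, and commutative if $x\cdot y=y\cdot x$ for all $x,y$. *)

theory Defs
  imports Complex_Main
begin

definition algebra_over :: "('k::field \<Rightarrow> 'v::ab_group_add \<Rightarrow> 'v) \<Rightarrow> ('v \<Rightarrow> 'v \<Rightarrow> 'v) \<Rightarrow> bool" where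
  "algebra_over scale mult \<longleftrightarrow>
     vector_space scale \<and>
     (\<forall>x. Vector_Spaces.linear scale scale (mult x)) \<and>
     (\<forall>y. Vector_Spaces.linear scale scale (\<lambda>x. mult x y))"

definition nearly_associative :: "('v \<Rightarrow> 'v \<Rightarrow> 'v) \<Rightarrow> bool" where
  "nearly_associative mult \<longleftrightarrow> (\<forall>x y z. mult x (mult y z) = mult (mult z x) y)"

definition commutative_product :: "('v \<Rightarrow> 'v \<Rightarrow> 'v) \<Rightarrow> bool" where
  "commutative_product mult \<longleftrightarrow> (\<forall>x y. mult x y = mult y x)"

definition associator :: "('v::ab_group_add \<Rightarrow> 'v \<Rightarrow> 'v) \<Rightarrow> 'v \<Rightarrow> 'v \<Rightarrow> 'v \<Rightarrow> 'v" where
  "associator mult x y z = mult (mult x y) z - mult x (mult y z)"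

definition anti_flexible :: "('v::ab_group_add \<Rightarrow> 'v \<Rightarrow> 'v) \<Rightarrow> bool" where
  "anti_flexible mult \<longleftrightarrow>
     (\<forall>x y z. mult (mult x y) z - mult (mult z y) x = mult x (mult y z) - mult z (mult y x))"

end

theory Submission
  imports Defs
begin

theorem mainTheorem2:
  fixes scale :: "'k::field_char_0 \<Rightarrow> 'v::ab_group_add \<Rightarrow> 'v"
    and mult :: "'v \<Rightarrow> 'v \<Rightarrow> 'v"
  assumes "algebra_over scale mult"
    and "commutative_product mult"
    and "nearly_associative mult"
  shows "anti_flexible mult"
proof -
  have C: "\<And>x y. mult x y = mult y x" using assms(2) unfolding commutative_product_def by blast
  have N: "\<And>x y z. mult x (mult y z) = mult (mult z x) y" using assms(3) unfolding nearly_associative_def by blast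
  have K: "\<And>x y z. mult x (mult y z) = mult z (mult y x)"
  proof -
    fix x y z
    have "mult x (mult y z) = mult (mult z x) y" by (rule N)
    moreover have "mult z (mult y x) = mult (mult x z) y" by (rule N)
    ultimately show "mult x (mult y z) = mult z (mult y x)" using C by metis
  qed
  show ?thesis unfolding anti_flexible_def
  proof (intro allI)
    fix x y z
    have "mult (mult x y) z = mult z (mult y x)" using C by metis
    moreover have "mult (mult z y) x = mult x (mult y z)" using C by metis
    ultimately show "mult (mult x y) z - mult (mult z y) x = mult x (mult y z) - mult z (mult y x)"
      using K by simp
  qed
qed

end
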